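(* For every $\mu>0$ and $\delta>0$, the function $\alpha\mapsto\sigma(\mu,\alpha,\delta)$ on $[0,+\infty)$ attains its maximum at a unique point $\alpha_m=\alpha_m(\mu,\delta)\ge 0$. Moreover $\alpha_m$ depends on $(\mu,\delta)$ only through $\beta=\mu\delta$, it is non-increasing as a function of $\beta$, and: (i) if $\mu\delta\ge 1/2$ then $\alpha_m=0$; (ii) $\alpha_m\to 1$ as $\mu\delta\to 0$. In particular $\alpha_m<1$ for all $\mu,\delta>0$.
   Context: For $\mu,\delta>0$ and $\alpha\ge 0$ define the steady state activity $a_\infty(\mu,\alpha,\delta):=\frac{1}{\delta+1/\mu}$ if $\alpha=0$, and for $\alpha>0$ \[a_\infty(\mu,\alpha,\delta):=\frac1\delta-\frac{1+\alpha+\mu\delta-\sqrt{\Delta(\mu,\alpha,\delta)}}{2\alpha\delta},\qquad \Delta(\mu,\alpha,\delta):=(1+\mu\delta-\alpha)^2+4\mu\alpha\delta\] (in all cases $a_\infty$ is the unique positive solution $a$ of $a\big(\delta+\frac1{\mu+\alpha a}\big)=1$; it is the stationary firing rate of the mean-field limit of age-dependent Hawkes processes with intensity $(\mu+x)\mathbf 1_{s\ge\delta}$, input $\mu$, refractory period $\delta$, mean connectivity $\alpha$). The stimulus sensitivity is $\sigma(\mu,\alpha,\delta):=\frac{\partial}{\partial\mu}a_\infty(\mu,\alpha,\delta)$; explicitly $\sigma=1/(1+\mu\delta)^2$ for $\alpha=0$ and $\sigma=-\frac1{2\alpha}+\frac{1+\mu\delta+\alpha}{2\alpha\sqrt{\Delta}}$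 for $\alpha>0$. The critical value of the connectivity is $\alpha_c=1$. *)

theory Defs
  imports "HOL-Analysis.Analysis"
begin

definition Delta :: "real \<Rightarrow> real \<Rightarrow> real \<Rightarrow> real" where
  "Delta \<mu> \<alpha> \<delta> = (1 + \<mu> * \<delta> - \<alpha>)^2 + 4 * \<mu> * \<alpha> * \<delta>"

definition a_inf :: "real \<Rightarrow> real \<Rightarrow> real \<Rightarrow> real" where
  "a_inf \<mu> \<alpha> \<delta> =
     (if \<alpha> = 0 then 1 / (\<delta> + 1 / \<mu>)
      else 1 / \<delta> - (1 + \<alpha> + \<mu> * \<delta> - sqrt (Delta \<mu> \<alpha> \<delta>)) / (2 * \<alpha> * \<delta>))"

definition sigma :: "real \<Rightarrow> real \<Rightarrow> real \<Rightarrow> real" where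
  "sigma \<mu> \<alpha> \<delta> = deriv (\<lambda>m. a_inf m \<alpha> \<delta>) \<mu>"

definition alpha_m :: "real \<Rightarrow> real \<Rightarrow> real" where
  "alpha_m \<mu> \<delta> = (THE am. am \<ge> 0 \<and> (\<forall>\<alpha>\<ge>0. sigma \<mu> \<alpha> \<delta> \<le> sigma \<mu> am \<delta>))"

end

theory Submission
  imports Defs
begin



definition D :: "real \<Rightarrow> real \<Rightarrow> real" where "D b a = (1 + b - a)^2 + 4*b*a"
definition X :: "real \<Rightarrow> real \<Rightarrow> real" where "X b a = (a + b - 1 + sqrt (D b a))/2"
definition H :: "real \<Rightarrow> real \<Rightarrow> real" where "H b x = x / ((x+1)*(x^2+b))"

lemma key0: fixes x b :: real shows "x>0 \<Longrightarrow> (1+b+((x-b)*(x+1)/x)-(2*x+1-b-((x-b)*(x+1)/x)))*((x+1)*(x^2+b)) = x*(2*((x-b)*(x+1)/x)*(2*x+1-b-((x-b)*(x+1)/x)))"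
  by (simp add: field_simps power2_eq_square)
lemma key: fixes x a b r :: real shows "x>0 \<Longrightarrow> a = (x-b)*(x+1)/x \<Longrightarrow> r = 2*x+1-b-a \<Longrightarrow> (1+b+a-r)*((x+1)*(x^2+b)) = x*(2*a*r)"
  using key0 by blast

lemma X_pos: assumes "b > 0" "a \<ge> 0" shows "X b a > 0"
proof -
  have "D b a = (a+b-1)^2 + 4*b" unfolding D_def by (simp add: algebra_simps power2_eq_square)
  hence "sqrt (D b a) > sqrt ((a+b-1)^2)" using assms by (intro real_sqrt_less_mono) auto
  hence "sqrt (D b a) > \<bar>a+b-1\<bar>" by simp
  hence "a+b-1+sqrt (D b a) > 0" by linarith
  thus ?thesis unfolding X_def by simp
qed

lemma X_quad: assumes "b > 0" "a \<ge> 0" shows "(X b a)^2 + (1-b-a)*X b a - b = 0"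
proof -
  have D: "D b a \<ge> 0" unfolding D_def using assms by auto
  define r where "r = sqrt (D b a)"
  have r2: "r^2 = (a+b-1)^2 + 4*b" unfolding r_def using D by (simp add: D_def algebra_simps power2_eq_square)
  show ?thesis unfolding X_def r_def[symmetric]
  proof -
    have "((a + b - 1 + r) / 2)\<^sup>2 + (1 - b - a) * ((a + b - 1 + r) / 2) - b = (r^2 - (a+b-1)^2)/4 - b"
      by (simp add: power2_eq_square field_simps)
    thus "((a + b - 1 + r) / 2)\<^sup>2 + (1 - b - a) * ((a + b - 1 + r) / 2) - b = 0" using r2 by simp
  qed
qed

lemma sigma_pos_alpha:
  assumes "\<mu> > 0" "\<delta> > 0" "\<alpha> > 0"
  shows "sigma \<mu> \<alpha> \<delta> = H (\<mu>*\<delta>) (X (\<mu>*\<delta>) \<alpha>)"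
proof -
  define b where "b = \<mu>*\<delta>"
  have b: "b > 0" using assms by (simp add: b_def)
  have Dpos: "Delta \<mu> \<alpha> \<delta> > 0" unfolding Delta_def using assms
    by (intro add_nonneg_pos) auto
  have DD: "Delta \<mu> \<alpha> \<delta> = D b \<alpha>" unfolding Delta_def D_def b_def by simp
  define r where "r = sqrt (D b \<alpha>)"
  have rpos: "r > 0" using Dpos DD r_def by simp
  have r2: "r^2 = (1 + b - \<alpha>)^2 + 4*b*\<alpha>" using Dpos DD r_def by (simp add: D_def)
  have dD: "((\<lambda>m. Delta m \<alpha> \<delta>) has_real_derivative (2*(1+\<mu>*\<delta>-\<alpha>)*\<delta> + 4*\<alpha>*\<delta>)) (at \<mu>)"
    unfolding Delta_def by (auto intro!: derivative_eq_intros simp: algebra_simps)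
  have dA: "((\<lambda>m. a_inf m \<alpha> \<delta>) has_real_derivative
      (- (\<delta> - (2*(1+\<mu>*\<delta>-\<alpha>)*\<delta> + 4*\<alpha>*\<delta>) / (2 * sqrt (Delta \<mu> \<alpha> \<delta>))) / (2*\<alpha>*\<delta>))) (at \<mu>)"
    unfolding a_inf_def using assms Dpos
    by (auto intro!: derivative_eq_intros dD simp: field_simps)
  hence "sigma \<mu> \<alpha> \<delta> = (- (\<delta> - (2*(1+\<mu>*\<delta>-\<alpha>)*\<delta> + 4*\<alpha>*\<delta>) / (2 * sqrt (Delta \<mu> \<alpha> \<delta>))) / (2*\<alpha>*\<delta>))"
    unfolding sigma_def by (rule DERIV_imp_deriv)
  also have "\<dots> = (1+b+\<alpha>-r)/(2*\<alpha>*r)"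
  proof -
    have sq: "sqrt (Delta \<mu> \<alpha> \<delta>) = r" using DD r_def by simp
    show ?thesis using assms rpos unfolding sq b_def by (simp add: field_simps)
  qed
  also have "\<dots> = H b (X b \<alpha>)"
  proof -
    define x where "x = X b \<alpha>"
    have x: "x = (\<alpha>+b-1+r)/2" unfolding x_def X_def r_def by simp
    have xpos: "x > 0" using X_pos b assms x_def by auto
    have q: "x^2 + (1-b-\<alpha>)*x - b = 0" using X_quad[OF b] assms x_def by auto
    have "\<alpha>*x = (x-b)*(x+1)" using q by (simp add: algebra_simps power2_eq_square)
    hence ae: "\<alpha> = (x-b)*(x+1)/x" using xpos by (simp add: field_simps)
    have re: "r = 2*x+1-b-\<alpha>" using x by simp
    have "(1+b+\<alpha>-r)*((x+1)*(x^2+b)) = x * (2*\<alpha>*r)"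
      using key[OF xpos ae re] .
    moreover have "(x+1)*(x^2+b) > 0" using xpos b by (intro mult_pos_pos add_nonneg_pos) auto
    ultimately show ?thesis unfolding H_def x_def[symmetric] using assms rpos
      by (simp add: field_simps)
  qed
  finally show ?thesis by (simp add: b_def)
qed

lemma sigma_zero_alpha:
  assumes "\<mu> > 0" "\<delta> > 0"
  shows "sigma \<mu> 0 \<delta> = H (\<mu>*\<delta>) (X (\<mu>*\<delta>) 0)"
proof -
  have "1+\<mu>*\<delta> > 0" "1+\<delta>*\<mu> \<noteq> 0" using assms by (simp_all add: add_pos_pos add_pos_pos[THEN less_imp_neq, symmetric] )
  have "((\<lambda>m. a_inf m 0 \<delta>) has_real_derivative (- (-(1/\<mu>^2)) / (\<delta> + 1/\<mu>)^2)) (at \<mu>)"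
    unfolding a_inf_def using assms \<open>1+\<delta>*\<mu> \<noteq> 0\<close>
    by (auto intro!: derivative_eq_intros simp: field_simps power2_eq_square add_pos_pos)
  hence "sigma \<mu> 0 \<delta> = (- (-(1/\<mu>^2)) / (\<delta> + 1/\<mu>)^2)" unfolding sigma_def by (rule DERIV_imp_deriv)
  also have "\<dots> = 1/(1+\<mu>*\<delta>)^2" using assms \<open>1+\<mu>*\<delta> > 0\<close> by (simp add: field_simps power2_eq_square)
  also have "\<dots> = H (\<mu>*\<delta>) (X (\<mu>*\<delta>) 0)"
  proof -
    have "D (\<mu>*\<delta>) 0 = (1+\<mu>*\<delta>)^2" by (simp add: D_def)
    hence "X (\<mu>*\<delta>) 0 = \<mu>*\<delta>" unfolding X_def using assms by simp
    moreover have "\<And>b::real. b > 0 \<Longrightarrow> b/((b+1)*(b^2+b)) = 1/(1+b)^2"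
    proof -
      fix b :: real assume "b > 0"
      have "(b+1)*(b^2+b) = b*(1+b)^2" by (simp add: power2_eq_square algebra_simps)
      thus "b/((b+1)*(b^2+b)) = 1/(1+b)^2" using \<open>b>0\<close> by simp
    qed
    ultimately show ?thesis unfolding H_def using assms by simp
  qed
  finally show ?thesis .
qed




definition Ainv :: "real \<Rightarrow> real \<Rightarrow> real" where "Ainv b x = (x-b)*(x+1)/x"

lemma sigma_eq: "\<mu> > 0 \<Longrightarrow> \<delta> > 0 \<Longrightarrow> \<alpha> \<ge> 0 \<Longrightarrow> sigma \<mu> \<alpha> \<delta> = H (\<mu>*\<delta>) (X (\<mu>*\<delta>) \<alpha>)"
  using sigma_pos_alpha sigma_zero_alpha by (cases "\<alpha> = 0") auto

lemma X_Ainv: assumes "b > 0" "a \<ge> 0" shows "Ainv b (X b a) = a"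
proof -
  define x where "x = X b a"
  have xp: "x > 0" using X_pos assms x_def by auto
  have q: "x^2 + (1-b-a)*x - b = 0" using X_quad assms x_def by auto
  have "a*x = (x-b)*(x+1)" using q by (simp add: algebra_simps power2_eq_square)
  thus ?thesis using xp unfolding Ainv_def x_def[symmetric] by (simp add: field_simps)
qed

lemma X_ge: assumes "b > 0" "a \<ge> 0" shows "X b a \<ge> b"
proof (rule ccontr)
  define x where "x = X b a"
  assume "\<not> X b a \<ge> b"
  hence "x < b" by (simp add: x_def)
  have xp: "x > 0" using X_pos assms x_def by auto
  have "a = (x-b)*(x+1)/x" using X_Ainv[OF assms] by (simp add: Ainv_def x_def)
  moreover have "(x-b)*(x+1) < 0" using \<open>x<b\<close> xp by (intro mult_neg_pos) auto
  ultimately have "a < 0" using xp by (simp add: divide_neg_pos)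
  thus False using assms by simp
qed

lemma Ainv_nonneg: "b > 0 \<Longrightarrow> x \<ge> b \<Longrightarrow> Ainv b x \<ge> 0"
  unfolding Ainv_def by (intro divide_nonneg_pos mult_nonneg_nonneg) auto

lemma Ainv_X: assumes "b > 0" "x \<ge> b" shows "X b (Ainv b x) = x"
proof (rule ccontr)
  define a where "a = Ainv b x"
  define y where "y = X b a"
  have a: "a \<ge> 0" using Ainv_nonneg assms a_def by auto
  have yp: "y > 0" using X_pos assms a y_def by auto
  have xp: "x > 0" using assms by auto
  have qy: "y^2 + (1-b-a)*y - b = 0" using X_quad assms a y_def by auto
  have "a*x = (x-b)*(x+1)" using xp unfolding a_def Ainv_def by simp
  hence qx: "x^2 + (1-b-a)*x - b = 0" by (simp add: algebra_simps power2_eq_square)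
  assume "X b (Ainv b x) \<noteq> x"
  hence ne: "x \<noteq> y" unfolding y_def a_def by auto
  have "(x-y)*(x+y+1-b-a) = 0" using qx qy by (simp add: algebra_simps power2_eq_square)
  hence s: "x + y = b + a - 1" using ne by simp
  have "x*(x + (1-b-a)) = b" using qx by (simp add: algebra_simps power2_eq_square)
  hence "x*(-y) = b" using s by (smt (verit))
  moreover have "x*y > 0" using xp yp by simp
  ultimately show False using assms by simp
qed




definition p :: "real \<Rightarrow> real" where "p x = 2*x^3 + x^2"

lemma p_strict: "0 \<le> x \<Longrightarrow> x < y \<Longrightarrow> p x < p y"
  unfolding p_def
proof -
  assume "0 \<le> x" "x < y"
  have "x^3 < y^3" using \<open>0 \<le> x\<close> \<open>x<y\<close> by (intro power_strict_mono) auto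
  moreover have "x^2 < y^2" using \<open>0 \<le> x\<close> \<open>x<y\<close> by (intro power_strict_mono) auto
  ultimately show "2*x^3 + x^2 < 2*y^3 + y^2" by simp
qed

lemma p_ex: assumes "b > 0" shows "\<exists>x. x > 0 \<and> p x = b"
proof -
  have "p 0 \<le> b" using assms by (simp add: p_def)
  moreover have "b \<le> p (b+1)"
  proof -
    have "b \<le> (b+1)^2" using assms by (simp add: power2_eq_square algebra_simps)
    moreover have "0 \<le> (b+1)^3" using assms by (intro zero_le_power) auto
    ultimately show ?thesis unfolding p_def by linarith
  qed
  moreover have "\<forall>x. 0 \<le> x \<and> x \<le> b+1 \<longrightarrow> isCont p x" unfolding p_def by (auto intro!: continuous_intros)
  ultimately obtain x where "0 \<le> x" "x \<le> b+1" "p x = b" using IVT[of p 0 b "b+1"] assms by auto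
  moreover have "x \<noteq> 0" using \<open>p x = b\<close> assms by (auto simp: p_def)
  ultimately have "x > 0 \<and> p x = b" by linarith
  thus ?thesis by blast
qed

definition xs :: "real \<Rightarrow> real" where "xs b = (THE x. x > 0 \<and> p x = b)"

lemma xs: assumes "b > 0" shows "xs b > 0" "p (xs b) = b"
proof -
  have "\<exists>!x. x > 0 \<and> p x = b"
  proof -
    obtain x where x: "x > 0" "p x = b" using p_ex assms by blast
    moreover have "y = x" if "y > 0" "p y = b" for y
    proof (rule ccontr)
      assume "y \<noteq> x"
      hence "y < x \<or> x < y" by linarith
      thus False
      proof
        assume "y < x" thus False using p_strict[of y x] x that by simp
      next
        assume "x < y" thus False using p_strict[of x y] x that by simp
      qed
    qed
    ultimately show ?thesis by blast
  qed
  hence "xs b > 0 \<and> p (xs b) = b" unfolding xs_def by (rule theI')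
  thus "xs b > 0" "p (xs b) = b" by auto
qed

lemma p_mono_rev: "0 \<le> x \<Longrightarrow> 0 \<le> y \<Longrightarrow> p x \<le> p y \<Longrightarrow> x \<le> y"
proof (rule ccontr)
  assume "0 \<le> x" "0 \<le> y" "p x \<le> p y" "\<not> x \<le> y"
  hence "y < x" by simp
  hence "p y < p x" using p_strict \<open>0 \<le> y\<close> by blast
  thus False using \<open>p x \<le> p y\<close> by simp
qed

lemma xs_mono: assumes "0 < b1" "b1 \<le> b2" shows "xs b1 \<le> xs b2"
proof -
  have "0 < b2" using assms by linarith
  note h1 = xs[OF assms(1)] and h2 = xs[OF \<open>0<b2\<close>]
  show ?thesis
    by (rule p_mono_rev) (use h1 h2 assms(2) in linarith)+
qed

lemma p_b: assumes "0 < b" "b \<le> 1/2" shows "p b \<le> b"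
proof -
  have "p b - b = (b*(b+1))*(2*b-1)" unfolding p_def by (simp add: algebra_simps power2_eq_square power3_eq_cube)
  moreover have "(b*(b+1))*(2*b-1) \<le> 0"
    by (rule mult_nonneg_nonpos) (use assms in simp_all)
  ultimately show ?thesis by linarith
qed

lemma p_b': assumes "1/2 \<le> b" shows "b \<le> p b"
proof -
  have "p b - b = (b*(b+1))*(2*b-1)" unfolding p_def by (simp add: algebra_simps power2_eq_square power3_eq_cube)
  moreover have "(b*(b+1))*(2*b-1) \<ge> 0"
    by (rule mult_nonneg_nonneg) (use assms in simp_all)
  ultimately show ?thesis by linarith
qed

lemma xs_ge: assumes "0 < b" "b \<le> 1/2" shows "b \<le> xs b"
proof -
  note h = xs[OF assms(1)] and h2 = p_b[OF assms]
  show ?thesis by (rule p_mono_rev) (use h h2 assms in linarith)+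
qed

lemma xs_le: assumes "1/2 \<le> b" shows "xs b \<le> b"
proof -
  have b: "0 < b" using assms by linarith
  note h = xs[OF b] and h2 = p_b'[OF assms]
  show ?thesis by (rule p_mono_rev) (use h h2 b in linarith)+
qed

lemma H_diff: assumes "x > 0" "y > 0" "b > 0"
  shows "H b y - H b x = (y-x)*(b - x*y*(x+y+1)) / ((x+1)*(x^2+b)*(y+1)*(y^2+b))"
proof -
  have "x^2+b > 0" "y^2+b > 0" using assms by (auto intro: add_nonneg_pos)
  define P where "P = (x+1)*(x^2+b)"
  define Q where "Q = (y+1)*(y^2+b)"
  have P: "P \<noteq> 0" "Q \<noteq> 0" unfolding P_def Q_def using assms \<open>x^2+b > 0\<close> \<open>y^2+b > 0\<close> by auto
  have "H b y - H b x = (y*P - x*Q)/(P*Q)" unfolding H_def P_def[symmetric] Q_def[symmetric]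
    using P by (simp add: field_simps)
  also have "y*P - x*Q = (y-x)*(b - x*y*(x+y+1))" unfolding P_def Q_def by (simp add: algebra_simps power2_eq_square)
  finally show ?thesis unfolding P_def Q_def by (simp add: mult.assoc)
qed

lemma H_less: assumes "x > 0" "y > 0" "b > 0" "(y-x)*(b - x*y*(x+y+1)) > 0"
  shows "H b x < H b y"
proof -
  have "x^2+b > 0" "y^2+b > 0" using assms by (auto intro: add_nonneg_pos)
  hence "(y-x)*(b - x*y*(x+y+1)) / ((x+1)*(x^2+b)*(y+1)*(y^2+b)) > 0" using assms by simp
  thus ?thesis using H_diff[OF assms(1-3)] by simp
qed

definition xm :: "real \<Rightarrow> real" where "xm b = max b (xs b)"

lemma H_max: assumes "b > 0" "x \<ge> b" "x \<noteq> xm b" shows "H b x < H b (xm b)"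
proof (cases "b \<le> 1/2")
  case True
  define t where "t = xs b"
  have t: "t > 0" "2*t^3+t^2 = b" using xs[OF assms(1)] t_def p_def by auto
  have "xm b = t" using xs_ge[OF assms(1) True] unfolding xm_def t_def by simp
  have xp: "x > 0" using assms by auto
  have bs: "b = t*t*(t+t+1)" using t by (simp add: power2_eq_square power3_eq_cube algebra_simps)
  have "(t-x)*(b - x*t*(x+t+1)) > 0"
  proof (cases "x < t")
    case True
    have h1: "x*t < t*t" using True t by (simp add: mult_strict_right_mono)
    have h2: "x+t+1 < t+t+1" using True by simp
    have "x*t*(x+t+1) < t*t*(t+t+1)"
      by (rule mult_strict_mono[OF h1 h2]) (use xp t in auto)
    hence "b - x*t*(x+t+1) > 0" using bs by linarith
    moreover have "t - x > 0" using True by simp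
    ultimately show ?thesis by (rule mult_pos_pos[rotated])
  next
    case False
    hence "t < x" using assms \<open>xm b = t\<close> by auto
    have h1: "t*t < x*t" using \<open>t<x\<close> t by (simp add: mult_strict_right_mono)
    have h2: "t+t+1 < x+t+1" using \<open>t<x\<close> by simp
    have "t*t*(t+t+1) < x*t*(x+t+1)"
      by (rule mult_strict_mono[OF h1 h2]) (use xp t in auto)
    hence "b - x*t*(x+t+1) < 0" using bs by linarith
    moreover have "t - x < 0" using \<open>t<x\<close> by simp
    ultimately show ?thesis by (rule mult_neg_neg[rotated])
  qed
  thus ?thesis using H_less[OF xp t(1) assms(1)] \<open>xm b = t\<close> by simp
next
  case False
  have "xm b = b" using xs_le[of b] False unfolding xm_def by simp
  hence "b < x" using assms by auto
  have "1 < x*(x+b+1)"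
  proof -
    have h1: "1/2 < x" using \<open>b<x\<close> False by simp
    have h2: "2 < x+b+1" using \<open>b<x\<close> False by simp
    have "1/2*2 < x*(x+b+1)" by (rule mult_strict_mono[OF h1 h2]) (use h1 in auto)
    thus ?thesis by simp
  qed
  hence "b*1 < b*(x*(x+b+1))" using assms by (intro mult_strict_left_mono) auto
  hence "(b-x)*(b - x*b*(x+b+1)) > 0" using \<open>b<x\<close> by (intro mult_neg_neg) (auto simp: algebra_simps)
  thus ?thesis using H_less[of x b b] \<open>b<x\<close> assms \<open>xm b = b\<close> by simp
qed




definition g :: "real \<Rightarrow> real" where "g b = Ainv b (xm b)"
definition phi :: "real \<Rightarrow> real" where "phi t = (1-2*t)*(1+t)^2"

lemma xm_ge: "b \<le> xm b" unfolding xm_def by simp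

lemma g_nonneg: "b > 0 \<Longrightarrow> g b \<ge> 0"
  unfolding g_def using Ainv_nonneg xm_ge by blast

lemma g_small: assumes "0 < b" "b \<le> 1/2" shows "g b = phi (xs b)"
proof -
  define t where "t = xs b"
  have t: "t > 0" "2*t^3+t^2 = b" using xs[OF assms(1)] t_def p_def by auto
  have "xm b = t" using xs_ge[OF assms] unfolding xm_def t_def by simp
  hence "g b = (t-b)*(t+1)/t" unfolding g_def Ainv_def by simp
  also have "\<dots> = (t-(2*t^3+t^2))*(t+1)/t" using t by simp
  also have "\<dots> = phi t" unfolding phi_def using t(1) by (simp add: field_simps power2_eq_square power3_eq_cube)
  finally show ?thesis by (simp add: t_def)
qed

lemma g_large: assumes "1/2 \<le> b" shows "g b = 0"
proof -
  have "xm b = b" using xs_le[OF assms] unfolding xm_def by simp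
  thus ?thesis unfolding g_def Ainv_def by simp
qed

lemma phi_alt: "phi t = 1 - 3*t^2 - 2*t^3"
  unfolding phi_def by (simp add: algebra_simps power2_eq_square power3_eq_cube)

lemma phi_mono: assumes "0 \<le> s" "s \<le> t" shows "phi t \<le> phi s"
proof -
  have "s^2 \<le> t^2" "s^3 \<le> t^3" using assms by (auto intro: power_mono)
  thus ?thesis unfolding phi_alt by simp
qed

lemma phi_less: assumes "0 < t" shows "phi t < 1"
proof -
  have "t^2 > 0" "t^3 > 0" using assms by auto
  thus ?thesis unfolding phi_alt by linarith
qed

lemma g_mono: assumes "0 < b1" "b1 \<le> b2" shows "g b2 \<le> g b1"
proof (cases "1/2 \<le> b2")
  case True
  thus ?thesis using g_large g_nonneg assms by simp
next
  case False
  have "0 < b2" using assms by linarith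
  have "g b2 = phi (xs b2)" "g b1 = phi (xs b1)" using g_small False assms \<open>0<b2\<close> by auto
  moreover have "xs b1 \<le> xs b2" using xs_mono assms by blast
  moreover have "0 \<le> xs b1" using xs assms by (simp add: less_imp_le)
  ultimately show ?thesis using phi_mono by simp
qed

lemma g_lim: "(g \<longlongrightarrow> 1) (at_right 0)"
proof -
  have ev: "eventually (\<lambda>b. 0 < b \<and> b < 1/2) (at_right (0::real))"
    unfolding eventually_at_right_field by (intro exI[of _ "1/2"]) auto
  have "eventually (\<lambda>b. 0 \<le> xs b) (at_right (0::real))"
    using ev by eventually_elim (simp add: xs less_imp_le)
  moreover have "eventually (\<lambda>b. xs b \<le> sqrt b) (at_right (0::real))"
    using ev
  proof eventually_elim
    case (elim b)
    have "xs b ^ 2 \<le> p (xs b)" unfolding p_def using xs(1)[of b] elim by simp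
    thus ?case using xs(2)[of b] elim by (simp add: real_le_rsqrt)
  qed
  moreover have "((\<lambda>_. 0::real) \<longlongrightarrow> 0) (at_right 0)" by simp
  moreover have "(sqrt \<longlongrightarrow> 0) (at_right 0)"
    using tendsto_real_sqrt[OF tendsto_ident_at[of "0::real" "{0<..}"]] by simp
  ultimately have "(xs \<longlongrightarrow> 0) (at_right 0)" by (rule tendsto_sandwich)
  hence "((\<lambda>b. phi (xs b)) \<longlongrightarrow> phi 0) (at_right 0)" unfolding phi_def by (intro tendsto_intros)
  hence l: "((\<lambda>b. phi (xs b)) \<longlongrightarrow> 1) (at_right 0)" by (simp add: phi_def)
  have "eventually (\<lambda>b. phi (xs b) = g b) (at_right (0::real))"
    using ev by eventually_elim (simp add: g_small)
  thus ?thesis using l by (rule Lim_transform_eventually[rotated])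
qed

lemma g_less1: "b > 0 \<Longrightarrow> g b < 1"
  by (cases "1/2 \<le> b") (auto simp: g_large g_small xs phi_less)

lemma max_unique:
  assumes "\<mu> > 0" "\<delta> > 0"
  shows "g (\<mu>*\<delta>) \<ge> 0 \<and> (\<forall>\<alpha>\<ge>0. sigma \<mu> \<alpha> \<delta> \<le> sigma \<mu> (g (\<mu>*\<delta>)) \<delta>)"
    and "\<And>am. am \<ge> 0 \<Longrightarrow> (\<forall>\<alpha>\<ge>0. sigma \<mu> \<alpha> \<delta> \<le> sigma \<mu> am \<delta>) \<Longrightarrow> am = g (\<mu>*\<delta>)"
proof -
  define b where "b = \<mu>*\<delta>"
  have b: "b > 0" using assms b_def by simp
  have g0: "g b \<ge> 0" using g_nonneg b by simp
  have sg: "sigma \<mu> (g b) \<delta> = H b (xm b)"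
    using sigma_eq[OF assms g0] Ainv_X[OF b xm_ge] unfolding g_def b_def by simp
  have le: "sigma \<mu> \<alpha> \<delta> \<le> H b (xm b)" if "\<alpha> \<ge> 0" for \<alpha>
  proof -
    have "sigma \<mu> \<alpha> \<delta> = H b (X b \<alpha>)" using sigma_eq[OF assms that] b_def by simp
    moreover have "X b \<alpha> \<ge> b" using X_ge b that by simp
    ultimately show ?thesis using H_max[OF b, of "X b \<alpha>"] by (cases "X b \<alpha> = xm b") auto
  qed
  show "g (\<mu>*\<delta>) \<ge> 0 \<and> (\<forall>\<alpha>\<ge>0. sigma \<mu> \<alpha> \<delta> \<le> sigma \<mu> (g (\<mu>*\<delta>)) \<delta>)"
    using g0 le sg unfolding b_def by simp
  fix am assume am: "am \<ge> 0" "\<forall>\<alpha>\<ge>0. sigma \<mu> \<alpha> \<delta> \<le> sigma \<mu> am \<delta>"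
  have "sigma \<mu> (g b) \<delta> \<le> sigma \<mu> am \<delta>" using am g0 by simp
  hence h: "H b (xm b) \<le> H b (X b am)" using sg sigma_eq[OF assms am(1)] b_def by simp
  have "X b am = xm b"
  proof (rule ccontr)
    assume "X b am \<noteq> xm b"
    hence "H b (X b am) < H b (xm b)" using H_max[OF b] X_ge[OF b am(1)] by simp
    thus False using h by simp
  qed
  hence "Ainv b (X b am) = Ainv b (xm b)" by simp
  thus "am = g (\<mu>*\<delta>)" using X_Ainv[OF b am(1)] unfolding g_def b_def by simp
qed

lemma alpha_m_eq: assumes "\<mu> > 0" "\<delta> > 0" shows "alpha_m \<mu> \<delta> = g (\<mu>*\<delta>)"
proof -
  note m = max_unique[OF assms]
  have ex: "\<exists>!am. am \<ge> 0 \<and> (\<forall>\<alpha>\<ge>0. sigma \<mu> \<alpha> \<delta> \<le> sigma \<mu> am \<delta>)"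
  proof (rule ex1I[of _ "g (\<mu>*\<delta>)"])
    show "g (\<mu>*\<delta>) \<ge> 0 \<and> (\<forall>\<alpha>\<ge>0. sigma \<mu> \<alpha> \<delta> \<le> sigma \<mu> (g (\<mu>*\<delta>)) \<delta>)" by (rule m(1))
  next
    fix am assume "am \<ge> 0 \<and> (\<forall>\<alpha>\<ge>0. sigma \<mu> \<alpha> \<delta> \<le> sigma \<mu> am \<delta>)"
    thus "am = g (\<mu>*\<delta>)" using m(2) by blast
  qed
  show ?thesis unfolding alpha_m_def
    by (rule the1_equality[OF ex m(1)])
qed

theorem theorem1:
  shows "(\<forall>\<mu> \<delta>. \<mu> > 0 \<longrightarrow> \<delta> > 0 \<longrightarrow>
            (\<exists>!am. am \<ge> 0 \<and> (\<forall>\<alpha>\<ge>0. sigma \<mu> \<alpha> \<delta> \<le> sigma \<mu> am \<delta>)))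
    \<and> (\<exists>g :: real \<Rightarrow> real.
          (\<forall>\<mu> \<delta>. \<mu> > 0 \<longrightarrow> \<delta> > 0 \<longrightarrow> alpha_m \<mu> \<delta> = g (\<mu> * \<delta>))
        \<and> (\<forall>\<beta>1 \<beta>2. 0 < \<beta>1 \<longrightarrow> \<beta>1 \<le> \<beta>2 \<longrightarrow> g \<beta>2 \<le> g \<beta>1)
        \<and> (g \<longlongrightarrow> 1) (at_right 0))
    \<and> (\<forall>\<mu> \<delta>. \<mu> > 0 \<longrightarrow> \<delta> > 0 \<longrightarrow> \<mu> * \<delta> \<ge> 1/2 \<longrightarrow> alpha_m \<mu> \<delta> = 0)
    \<and> (\<forall>\<mu> \<delta>. \<mu> > 0 \<longrightarrow> \<delta> > 0 \<longrightarrow> alpha_m \<mu> \<delta> < 1)"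
proof (intro conjI allI impI)
  fix \<mu> \<delta> :: real assume a: "\<mu> > 0" "\<delta> > 0"
  note m = max_unique[OF a]
  show "\<exists>!am. am \<ge> 0 \<and> (\<forall>\<alpha>\<ge>0. sigma \<mu> \<alpha> \<delta> \<le> sigma \<mu> am \<delta>)"
  proof (rule ex1I[of _ "g (\<mu>*\<delta>)"])
    show "g (\<mu>*\<delta>) \<ge> 0 \<and> (\<forall>\<alpha>\<ge>0. sigma \<mu> \<alpha> \<delta> \<le> sigma \<mu> (g (\<mu>*\<delta>)) \<delta>)" by (rule m(1))
  next
    fix am assume "am \<ge> 0 \<and> (\<forall>\<alpha>\<ge>0. sigma \<mu> \<alpha> \<delta> \<le> sigma \<mu> am \<delta>)"
    thus "am = g (\<mu>*\<delta>)" using m(2) by blast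
  qed
next
  show "\<exists>g :: real \<Rightarrow> real.
          (\<forall>\<mu> \<delta>. \<mu> > 0 \<longrightarrow> \<delta> > 0 \<longrightarrow> alpha_m \<mu> \<delta> = g (\<mu> * \<delta>))
        \<and> (\<forall>\<beta>1 \<beta>2. 0 < \<beta>1 \<longrightarrow> \<beta>1 \<le> \<beta>2 \<longrightarrow> g \<beta>2 \<le> g \<beta>1)
        \<and> (g \<longlongrightarrow> 1) (at_right 0)"
  proof (intro exI[of _ g] conjI allI impI)
    fix \<mu> \<delta> :: real assume "\<mu> > 0" "\<delta> > 0"
    thus "alpha_m \<mu> \<delta> = g (\<mu> * \<delta>)" by (rule alpha_m_eq)
  next
    fix b1 b2 :: real assume "0 < b1" "b1 \<le> b2"
    thus "g b2 \<le> g b1" by (rule g_mono)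
  qed (rule g_lim)
next
  fix \<mu> \<delta> :: real assume a: "\<mu> > 0" "\<delta> > 0" "\<mu> * \<delta> \<ge> 1/2"
  thus "alpha_m \<mu> \<delta> = 0" using alpha_m_eq[OF a(1,2)] g_large[OF a(3)] by simp
next
  fix \<mu> \<delta> :: real assume a: "\<mu> > 0" "\<delta> > 0"
  have "\<mu>*\<delta> > 0" using a by simp
  thus "alpha_m \<mu> \<delta> < 1" using alpha_m_eq[OF a] g_less1 by simp
qed


end
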